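(* Let $p$ be a prime and let $G$ be a finite abelian $p$-group of order $p^{n}$. Let $M(G)$ denote the Schur multiplier of $G$ and write $|M(G)|=p^{\frac{n(n-1)}{2}-t}$ (so $t$ is an integer). Suppose that the Frattini subgroup $\Phi(G)$ has order $p^{a}$ with $a\geq 1$. Then there exists $m\in\mathbb{N}_0$ such that $$n=\frac{a(a+1)+2t+2m}{2a}.$$
   Context: $\mathbb{N}_0$ denotes the set of nonnegative integers. The Schur multiplier of a group $G$ with free presentation $G\cong F/R$ ($F$ free) is $M(G)=(R\cap F')/[R,F]$. $\Phi(G)$ is the Frattini subgroup of $G$. *)

theory Defs
  imports Complex_Main "HOL-Algebra.Algebra"
begin

text \<open>A letter (x, True) stands for x, (x, False) for its formal inverse.\<close>

fun fg_push :: "('x \<times> bool) \<Rightarrow> ('x \<times> bool) list \<Rightarrow> ('x \<times> bool) list" where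
  "fg_push l [] = [l]"
| "fg_push l (y # ys) = (if fst l = fst y \<and> snd l \<noteq> snd y then ys else l # y # ys)"

definition fg_reduce :: "('x \<times> bool) list \<Rightarrow> ('x \<times> bool) list" where
  "fg_reduce w = foldr fg_push w []"

definition free_group :: "'x set \<Rightarrow> (('x \<times> bool) list) monoid" where
  "free_group Y = \<lparr> carrier = {w. fg_reduce w = w \<and> fst ` set w \<subseteq> Y},
                    monoid.mult = (\<lambda>u v. fg_reduce (u @ v)),
                    one = [] \<rparr>"

definition fg_eval :: "('a, 'b) monoid_scheme \<Rightarrow> ('a \<times> bool) list \<Rightarrow> 'a" where
  "fg_eval G w = foldr (\<lambda>l acc. (if snd l then fst l else inv\<^bsub>G\<^esub> (fst l)) \<otimes>\<^bsub>G\<^esub> acc) w \<one>\<^bsub>G\<^esub>"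

definition pres_F :: "('a, 'b) monoid_scheme \<Rightarrow> (('a \<times> bool) list) monoid" where
  "pres_F G = free_group (carrier G)"

definition pres_R :: "('a, 'b) monoid_scheme \<Rightarrow> ('a \<times> bool) list set" where
  "pres_R G = {w \<in> carrier (pres_F G). fg_eval G w = \<one>\<^bsub>G\<^esub>}"

definition mixed_commutator :: "('c, 'd) monoid_scheme \<Rightarrow> 'c set \<Rightarrow> 'c set \<Rightarrow> 'c set" where
  "mixed_commutator F A B = generate F
     (\<Union>r\<in>A. \<Union>f\<in>B. {r \<otimes>\<^bsub>F\<^esub> f \<otimes>\<^bsub>F\<^esub> inv\<^bsub>F\<^esub> r \<otimes>\<^bsub>F\<^esub> inv\<^bsub>F\<^esub> f})"

text \<open>M(G) = (R \<inter> F') / [R, F]; its carrier is the set of cosets of [R,F] in R \<inter> F'.\<close>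

definition schur_multiplier_carrier :: "('a, 'b) monoid_scheme \<Rightarrow> ('a \<times> bool) list set set" where
  "schur_multiplier_carrier G =
     (let F = pres_F G; R = pres_R G; K = mixed_commutator F R (carrier F)
      in (\<lambda>x. K #>\<^bsub>F\<^esub> x) ` (R \<inter> derived F (carrier F)))"

definition schur_multiplier_order :: "('a, 'b) monoid_scheme \<Rightarrow> nat" where
  "schur_multiplier_order G = card (schur_multiplier_carrier G)"

definition maximal_subgroup :: "'a set \<Rightarrow> ('a, 'b) monoid_scheme \<Rightarrow> bool" where
  "maximal_subgroup H G \<longleftrightarrow> subgroup H G \<and> H \<noteq> carrier G \<and>
     (\<forall>K. subgroup K G \<and> H \<subseteq> K \<longrightarrow> K = H \<or> K = carrier G)"

definition frattini :: "('a, 'b) monoid_scheme \<Rightarrow> 'a set" where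
  "frattini G = carrier G \<inter> \<Inter> {H. maximal_subgroup H G}"

end

theory Submission
  imports Defs
begin


definition flipl :: "'x \<times> bool \<Rightarrow> 'x \<times> bool" where "flipl l = (fst l, \<not> snd l)"

fun red :: "('x \<times> bool) list \<Rightarrow> bool" where
  "red [] = True"
| "red [x] = True"
| "red (x # y # ys) = (\<not> (fst x = fst y \<and> snd x \<noteq> snd y) \<and> red (y # ys))"

definition act :: "('x \<times> bool) list \<Rightarrow> ('x \<times> bool) list \<Rightarrow> ('x \<times> bool) list" where
  "act u v = foldr fg_push u v"

lemma act_Nil[simp]: "act [] v = v" and act_Cons[simp]: "act (l # u) v = fg_push l (act u v)"
  by (simp_all add: act_def)

lemma act_append: "act (u @ v) w = act u (act v w)"
  by (simp add: act_def)

lemma red_tl: "red (y # ys) \<Longrightarrow> red ys"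
  by (cases ys) auto

lemma red_push: "red w \<Longrightarrow> red (fg_push l w)"
  by (cases w) (auto dest: red_tl)

lemma red_act: "red v \<Longrightarrow> red (act u v)"
  by (induction u) (auto intro: red_push)

lemma push_red: "red (l # w) \<Longrightarrow> fg_push l w = l # w"
  by (cases w) auto

lemma act_red_Nil: "red w \<Longrightarrow> act w [] = w"
proof (induction w)
  case Nil then show ?case by simp
next
  case (Cons l w)
  then have "act w [] = w" using red_tl by blast
  then show ?case using push_red[OF Cons.prems] by simp
qed

lemma fg_reduce_act: "fg_reduce w = act w []"
  by (simp add: fg_reduce_def act_def)

lemma fg_reduce_fix: "fg_reduce w = w \<longleftrightarrow> red w"
proof
  assume "fg_reduce w = w" then show "red w" using red_act[of "[]" w] by (simp add: fg_reduce_act)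
next
  assume "red w" then show "fg_reduce w = w" by (simp add: fg_reduce_act act_red_Nil)
qed

lemma push_flip: "red w \<Longrightarrow> fg_push (flipl l) (fg_push l w) = w"
proof -
  assume r: "red w"
  obtain a b where l: "l = (a, b)" by (cases l)
  show ?thesis
  proof (cases w)
    case Nil then show ?thesis by (simp add: flipl_def l)
  next
    case (Cons y ys)
    obtain c e where y: "y = (c, e)" by (cases y)
    show ?thesis
    proof (cases "a = c \<and> b \<noteq> e")
      case True
      show ?thesis
      proof (cases ys)
        case Nil then show ?thesis using Cons True by (simp add: flipl_def l y)
      next
        case (Cons z zs)
        obtain g h where z: "z = (g, h)" by (cases z)
        have "\<not> (c = g \<and> e \<noteq> h)" using r \<open>w = y # ys\<close> Cons y z by simp
        then show ?thesis using \<open>w = y # ys\<close> Cons True by (auto simp: flipl_def l y z)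
      qed
    next
      case False then show ?thesis using Cons by (auto simp: flipl_def l y)
    qed
  qed
qed

lemma flipl_flipl[simp]: "flipl (flipl l) = l" by (simp add: flipl_def)

lemma act_push: "red v \<Longrightarrow> act (fg_push l w) v = fg_push l (act w v)"
proof (cases w)
  case Nil then show ?thesis by simp
next
  case (Cons y ys)
  assume r: "red v"
  show ?thesis
  proof (cases "fst l = fst y \<and> snd l \<noteq> snd y")
    case True
    then have l: "l = flipl y" by (cases y, cases l) (auto simp: flipl_def)
    have "fg_push (flipl y) (fg_push y (act ys v)) = act ys v"
      by (rule push_flip, rule red_act[OF r])
    then show ?thesis using Cons True l by simp
  next
    case False then show ?thesis using Cons by auto
  qed
qed

lemma act_act_Nil: "red v \<Longrightarrow> act (act u []) v = act u v"
  by (induction u) (simp_all add: act_push)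

lemma fg_reduce_append: "fg_reduce (u @ v) = act u (fg_reduce v)"
  by (simp add: fg_reduce_act act_append)

lemma act_inverse: "act (rev (map flipl x)) x = []"
proof (induction x)
  case Nil then show ?case by simp
next
  case (Cons l w)
  have "act (rev (map flipl (l # w))) (l # w) = act (rev (map flipl w)) (fg_push (flipl l) (l # w))"
    by (simp add: act_append)
  also have "fg_push (flipl l) (l # w) = w" by (simp add: flipl_def)
  finally show ?case using Cons by simp
qed

lemma set_push: "set (fg_push l w) \<subseteq> insert l (set w)"
  by (cases w) auto

lemma set_act: "set (act u v) \<subseteq> set u \<union> set v"
  by (induction u) (use set_push in fastforce)+

lemma carrier_free: "w \<in> carrier (free_group Y) \<longleftrightarrow> red w \<and> fst ` set w \<subseteq> Y"
  by (simp add: free_group_def fg_reduce_fix)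

lemma mult_free: "u \<in> carrier (free_group Y) \<Longrightarrow> v \<in> carrier (free_group Y) \<Longrightarrow>
   u \<otimes>\<^bsub>free_group Y\<^esub> v = act u v"
  by (simp add: free_group_def fg_reduce_append)

lemma one_free[simp]: "\<one>\<^bsub>free_group Y\<^esub> = []"
  by (simp add: free_group_def)

lemma act_closed: "u \<in> carrier (free_group Y) \<Longrightarrow> v \<in> carrier (free_group Y) \<Longrightarrow>
   act u v \<in> carrier (free_group Y)"
proof -
  assume a: "u \<in> carrier (free_group Y)" "v \<in> carrier (free_group Y)"
  have "fst ` set (act u v) \<subseteq> fst ` set u \<union> fst ` set v"
    using set_act[of u v] by (simp add: image_Un[symmetric] image_mono)
  then show ?thesis using a red_act[of v u] unfolding carrier_free by blast
qed

lemma group_free: "group (free_group Y)"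
proof (rule groupI)
  fix x y assume "x \<in> carrier (free_group Y)" "y \<in> carrier (free_group Y)"
  then show "x \<otimes>\<^bsub>free_group Y\<^esub> y \<in> carrier (free_group Y)"
    by (simp add: mult_free act_closed)
next
  show "\<one>\<^bsub>free_group Y\<^esub> \<in> carrier (free_group Y)" by (simp add: carrier_free)
next
  fix x y z assume c: "x \<in> carrier (free_group Y)" "y \<in> carrier (free_group Y)" "z \<in> carrier (free_group Y)"
  have "act (act x y) z = act x (act y z)"
  proof -
    have "act (act x y) z = act (act (x @ y) []) z" by (simp add: act_append act_red_Nil c(2)[unfolded carrier_free])
    also have "\<dots> = act (x @ y) z" using c(3) by (simp add: carrier_free act_act_Nil)
    finally show ?thesis by (simp add: act_append)
  qed
  then show "x \<otimes>\<^bsub>free_group Y\<^esub> y \<otimes>\<^bsub>free_group Y\<^esub> z = x \<otimes>\<^bsub>free_group Y\<^esub> (y \<otimes>\<^bsub>free_group Y\<^esub> z)"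
    using c by (simp add: mult_free act_closed)
next
  fix x assume "x \<in> carrier (free_group Y)" then show "\<one>\<^bsub>free_group Y\<^esub> \<otimes>\<^bsub>free_group Y\<^esub> x = x"
    by (simp add: mult_free carrier_free)
next
  fix x assume c: "x \<in> carrier (free_group Y)"
  define y where "y = act (rev (map flipl x)) []"
  have "fst ` set y \<subseteq> fst ` set x"
    unfolding y_def using set_act[of "rev (map flipl x)" "[]"] by (force simp: flipl_def)
  then have yc: "y \<in> carrier (free_group Y)"
    unfolding carrier_free using c by (auto simp: red_act carrier_free y_def)
  have "y \<otimes>\<^bsub>free_group Y\<^esub> x = act (rev (map flipl x)) x"
    using yc c by (simp add: mult_free y_def act_act_Nil carrier_free)
  also have "\<dots> = \<one>\<^bsub>free_group Y\<^esub>" by (simp only: act_inverse one_free)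
  finally show "\<exists>y\<in>carrier (free_group Y). y \<otimes>\<^bsub>free_group Y\<^esub> x = \<one>\<^bsub>free_group Y\<^esub>"
    by (rule bexI[OF _ yc])
qed




definition ev :: "('c, 'd) monoid_scheme \<Rightarrow> ('x \<Rightarrow> 'c) \<Rightarrow> ('x \<times> bool) list \<Rightarrow> 'c" where
  "ev H s w = foldr (\<lambda>l acc. (if snd l then s (fst l) else inv\<^bsub>H\<^esub> (s (fst l))) \<otimes>\<^bsub>H\<^esub> acc) w \<one>\<^bsub>H\<^esub>"

lemma ev_Nil[simp]: "ev H s [] = \<one>\<^bsub>H\<^esub>"
  and ev_Cons[simp]: "ev H s (l # w) = (if snd l then s (fst l) else inv\<^bsub>H\<^esub> (s (fst l))) \<otimes>\<^bsub>H\<^esub> ev H s w"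
  by (simp_all add: ev_def)

lemma fg_eval_ev: "fg_eval G w = ev G id w"
  by (simp add: fg_eval_def ev_def id_def)

context group
begin

lemma ev_closed: "s ` Y \<subseteq> carrier G \<Longrightarrow> fst ` set w \<subseteq> Y \<Longrightarrow> ev G s w \<in> carrier G"
  by (induction w) auto

lemma ev_push:
  assumes "s ` Y \<subseteq> carrier G" "fst ` set w \<subseteq> Y" "fst l \<in> Y"
  shows "ev G s (fg_push l w) = ev G s (l # w)"
proof (cases w)
  case Nil then show ?thesis by simp
next
  case (Cons y ys)
  have sy: "s (fst y) \<in> carrier G" using assms Cons by auto
  have ys: "ev G s ys \<in> carrier G" using assms Cons by (intro ev_closed) auto
  show ?thesis
  proof (cases "fst l = fst y \<and> snd l \<noteq> snd y")
    case True
    then show ?thesis using Cons sy ys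
      by (cases "snd y") (auto simp: m_assoc[symmetric])
  next
    case False then show ?thesis using Cons by auto
  qed
qed

lemma ev_act:
  assumes "s ` Y \<subseteq> carrier G" "fst ` set u \<subseteq> Y" "fst ` set v \<subseteq> Y"
  shows "ev G s (act u v) = ev G s u \<otimes> ev G s v"
  using assms(2)
proof (induction u)
  case Nil then show ?case using ev_closed[OF assms(1,3)] by simp
next
  case (Cons l u)
  have "fst ` set (act u v) \<subseteq> fst ` set u \<union> fst ` set v"
    using set_act[of u v] by (simp add: image_Un[symmetric] image_mono)
  moreover have "fst ` set u \<subseteq> Y" using Cons.prems by simp
  ultimately have av: "fst ` set (act u v) \<subseteq> Y" using assms(3) by blast
  have "ev G s (act (l # u) v) = ev G s (l # act u v)"
    using ev_push[OF assms(1) av] Cons.prems by simp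
  also have "\<dots> = ev G s (l # u) \<otimes> ev G s v"
    using Cons assms ev_closed[OF assms(1)] by (auto simp: m_assoc)
  finally show ?case .
qed

lemma ev_hom:
  assumes "s ` Y \<subseteq> carrier G"
  shows "ev G s \<in> hom (free_group Y) G"
proof (rule homI)
  fix x assume "x \<in> carrier (free_group Y)" then show "ev G s x \<in> carrier G"
    using ev_closed[OF assms] by (simp add: carrier_free)
next
  fix x y assume "x \<in> carrier (free_group Y)" "y \<in> carrier (free_group Y)"
  then show "ev G s (x \<otimes>\<^bsub>free_group Y\<^esub> y) = ev G s x \<otimes> ev G s y"
    using ev_act[OF assms] by (simp add: mult_free carrier_free)
qed

end


lemma dvd_mod_sub: "(p::int) dvd (x mod p - x)"
  using mod_eq_dvd_iff[of "x mod p" p x] by simp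

lemma mod_simp3: "((xx::int) mod p + yy + (zz mod p) * ww) mod p = (xx + yy + zz * ww) mod p"
proof -
  have "(xx mod p + yy + (zz mod p) * ww) - (xx + yy + zz * ww) = (xx mod p - xx) + (zz mod p - zz) * ww"
    by (simp add: algebra_simps)
  moreover have "p dvd (xx mod p - xx) + (zz mod p - zz) * ww"
    by (intro dvd_add dvd_mult2 dvd_mod_sub)
  ultimately show ?thesis by (metis mod_eq_dvd_iff)
qed

lemma mod_assoc_lemma:
  fixes z w u A B C D p :: int
  shows "((z + w + A * B) mod p + u + ((A + C) mod p) * D) mod p =
         (z + (w + u + C * D) mod p + A * ((B + D) mod p)) mod p"
proof -
  define t1 where "t1 = (z + w + A * B) mod p - (z + w + A * B)"
  define t2 where "t2 = (A + C) mod p - (A + C)"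
  define t3 where "t3 = (w + u + C * D) mod p - (w + u + C * D)"
  define t4 where "t4 = (B + D) mod p - (B + D)"
  have "((z + w + A * B) mod p + u + ((A + C) mod p) * D) - (z + (w + u + C * D) mod p + A * ((B + D) mod p))
      = t1 + t2 * D - t3 - A * t4"
    unfolding t1_def t2_def t3_def t4_def by (simp add: algebra_simps)
  moreover have "p dvd t1 + t2 * D - t3 - A * t4"
    unfolding t1_def t2_def t3_def t4_def
    by (intro dvd_diff dvd_add dvd_mult dvd_mult2 dvd_mod_sub)
  ultimately show ?thesis by (simp add: mod_eq_dvd_iff)
qed

definition Pd :: "nat \<Rightarrow> (nat \<times> nat) set" where "Pd d = {(i, j). i < j \<and> j < d}"

definition Ext :: "('a, 'b) monoid_scheme \<Rightarrow> int \<Rightarrow> nat \<Rightarrow> (nat \<Rightarrow> 'a \<Rightarrow> int)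
    \<Rightarrow> ('a \<times> (nat \<times> nat \<Rightarrow> int)) monoid" where
  "Ext G p d f = \<lparr>carrier = carrier G \<times> (Pd d \<rightarrow>\<^sub>E {0..<p}),
    monoid.mult = (\<lambda>a b. (fst a \<otimes>\<^bsub>G\<^esub> fst b,
       restrict (\<lambda>ij. (snd a ij + snd b ij + f (fst ij) (fst a) * f (snd ij) (fst b)) mod p) (Pd d))),
    one = (\<one>\<^bsub>G\<^esub>, restrict (\<lambda>_. 0) (Pd d))\<rparr>"

locale dualb = comm_group G for G (structure) +
  fixes p :: int and d :: nat and f :: "nat \<Rightarrow> 'a \<Rightarrow> int" and g :: "nat \<Rightarrow> 'a"
  assumes p_gt1: "1 < p"
  and f_range: "\<And>i x. i < d \<Longrightarrow> x \<in> carrier G \<Longrightarrow> 0 \<le> f i x \<and> f i x < p"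
  and f_hom: "\<And>i x y. i < d \<Longrightarrow> x \<in> carrier G \<Longrightarrow> y \<in> carrier G \<Longrightarrow> f i (x \<otimes> y) = (f i x + f i y) mod p"
  and g_car: "\<And>j. j < d \<Longrightarrow> g j \<in> carrier G"
  and fg: "\<And>i j. i < d \<Longrightarrow> j < d \<Longrightarrow> f i (g j) = (if i = j then 1 else 0)"
begin

abbreviation "E \<equiv> Ext G p d f"

lemma Pd_lt: "ij \<in> Pd d \<Longrightarrow> fst ij < d \<and> snd ij < d \<and> fst ij < snd ij"
  by (auto simp: Pd_def)

lemma f_one: "i < d \<Longrightarrow> f i \<one> = 0"
proof -
  assume i: "i < d"
  have "f i \<one> = (f i \<one> + f i \<one>) mod p" using f_hom[OF i, of \<one> \<one>] by simp
  moreover have "0 \<le> f i \<one> \<and> f i \<one> < p" using f_range[OF i] by simp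
  ultimately show ?thesis
  proof (cases "f i \<one> + f i \<one> < p")
    case True
    then show ?thesis using \<open>f i \<one> = _\<close> \<open>0 \<le> f i \<one> \<and> _\<close> by simp
  next
    case False
    have "(f i \<one> + f i \<one>) mod p = (f i \<one> + f i \<one> - p + p) mod p" by simp
    also have "\<dots> = (f i \<one> + f i \<one> - p) mod p" by (rule mod_add_self2)
    also have "\<dots> = f i \<one> + f i \<one> - p" using False \<open>0 \<le> f i \<one> \<and> _\<close> by (intro mod_pos_pos_trivial) auto
    finally show ?thesis using \<open>f i \<one> = _\<close> \<open>0 \<le> f i \<one> \<and> _\<close> by linarith
  qed
qed

lemma f_inv: "i < d \<Longrightarrow> x \<in> carrier G \<Longrightarrow> f i (inv x) = (- f i x) mod p"
proof -
  assume i: "i < d" and x: "x \<in> carrier G"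
  have "0 = (f i (inv x) + f i x) mod p" using f_hom[OF i, of "inv x" x] x f_one[OF i] by simp
  then have "f i (inv x) mod p = (- f i x) mod p"
    by (metis add.commute add_diff_cancel_left' diff_0 mod_0 mod_diff_left_eq)
  moreover have "f i (inv x) mod p = f i (inv x)" using f_range[OF i, of "inv x"] x by simp
  ultimately show ?thesis by simp
qed

lemma E_carrier: "carrier E = carrier G \<times> (Pd d \<rightarrow>\<^sub>E {0..<p})"
  by (simp add: Ext_def)

lemma E_mult: "a \<otimes>\<^bsub>E\<^esub> b = (fst a \<otimes> fst b,
       restrict (\<lambda>ij. (snd a ij + snd b ij + f (fst ij) (fst a) * f (snd ij) (fst b)) mod p) (Pd d))"
  by (simp add: Ext_def)

lemma E_one: "\<one>\<^bsub>E\<^esub> = (\<one>, restrict (\<lambda>_. 0) (Pd d))"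
  by (simp add: Ext_def)

lemma p_pos: "0 < p" using p_gt1 by simp

lemma restrict_mod_in: "restrict (\<lambda>ij. h ij mod p) (Pd d) \<in> Pd d \<rightarrow>\<^sub>E {0..<p}"
  using p_pos by auto

lemma E_closed: "a \<in> carrier E \<Longrightarrow> b \<in> carrier E \<Longrightarrow> a \<otimes>\<^bsub>E\<^esub> b \<in> carrier E"
  unfolding E_carrier E_mult using restrict_mod_in by (auto simp: mem_Times_iff)

lemma PiE_mod: "z \<in> Pd d \<rightarrow>\<^sub>E {0..<p} \<Longrightarrow> ij \<in> Pd d \<Longrightarrow> z ij mod p = z ij"
  by (auto simp: PiE_iff)

lemma E_group: "group E"
proof (rule groupI)
  fix x y assume "x \<in> carrier E" "y \<in> carrier E" then show "x \<otimes>\<^bsub>E\<^esub> y \<in> carrier E" by (rule E_closed)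
next
  show "\<one>\<^bsub>E\<^esub> \<in> carrier E" unfolding E_one E_carrier using p_pos by auto
next
  fix x y z assume c: "x \<in> carrier E" "y \<in> carrier E" "z \<in> carrier E"
  then have cG: "fst x \<in> carrier G" "fst y \<in> carrier G" "fst z \<in> carrier G"
    by (auto simp: E_carrier mem_Times_iff)
  show "x \<otimes>\<^bsub>E\<^esub> y \<otimes>\<^bsub>E\<^esub> z = x \<otimes>\<^bsub>E\<^esub> (y \<otimes>\<^bsub>E\<^esub> z)"
  proof -
    have "restrict (\<lambda>ij. (snd (x \<otimes>\<^bsub>E\<^esub> y) ij + snd z ij + f (fst ij) (fst (x \<otimes>\<^bsub>E\<^esub> y)) * f (snd ij) (fst z)) mod p) (Pd d)
        = restrict (\<lambda>ij. (snd x ij + snd (y \<otimes>\<^bsub>E\<^esub> z) ij + f (fst ij) (fst x) * f (snd ij) (fst (y \<otimes>\<^bsub>E\<^esub> z))) mod p) (Pd d)"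
    proof (rule restrict_ext)
      fix ij assume ij: "ij \<in> Pd d"
      then have lt: "fst ij < d" "snd ij < d" using Pd_lt by auto
      show "(snd (x \<otimes>\<^bsub>E\<^esub> y) ij + snd z ij + f (fst ij) (fst (x \<otimes>\<^bsub>E\<^esub> y)) * f (snd ij) (fst z)) mod p
          = (snd x ij + snd (y \<otimes>\<^bsub>E\<^esub> z) ij + f (fst ij) (fst x) * f (snd ij) (fst (y \<otimes>\<^bsub>E\<^esub> z))) mod p"
        using ij by (simp add: E_mult f_hom[OF lt(1) cG(1,2)] f_hom[OF lt(2) cG(2,3)] mod_assoc_lemma)
    qed
    then show ?thesis by (simp add: E_mult m_assoc cG)
  qed
next
  fix x assume c: "x \<in> carrier E"
  then obtain a z where x: "x = (a, z)" "a \<in> carrier G" "z \<in> Pd d \<rightarrow>\<^sub>E {0..<p}"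
    by (auto simp: E_carrier)
  have "restrict (\<lambda>ij. (0 + z ij + f (fst ij) \<one> * f (snd ij) a) mod p) (Pd d) = restrict z (Pd d)"
  proof (rule restrict_ext)
    fix ij assume ij: "ij \<in> Pd d"
    then show "(0 + z ij + f (fst ij) \<one> * f (snd ij) a) mod p = z ij"
      using Pd_lt[OF ij] f_one PiE_mod[OF x(3) ij] by simp
  qed
  also have "restrict z (Pd d) = z" using x(3) by (rule PiE_restrict)
  finally show "\<one>\<^bsub>E\<^esub> \<otimes>\<^bsub>E\<^esub> x = x"
    using x by (simp add: E_mult E_one cong: restrict_cong)
next
  fix x assume c: "x \<in> carrier E"
  then obtain a z where x: "x = (a, z)" "a \<in> carrier G" "z \<in> Pd d \<rightarrow>\<^sub>E {0..<p}"
    by (auto simp: E_carrier)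
  define y where "y = (inv a, restrict (\<lambda>ij. (- z ij + f (fst ij) a * f (snd ij) a) mod p) (Pd d))"
  have yc: "y \<in> carrier E" unfolding y_def E_carrier using x restrict_mod_in by auto
  have "restrict (\<lambda>ij. (snd y ij + z ij + f (fst ij) (inv a) * f (snd ij) a) mod p) (Pd d)
       = restrict (\<lambda>_. 0) (Pd d)"
  proof (rule restrict_ext)
    fix ij assume ij: "ij \<in> Pd d"
    then have lt: "fst ij < d" "snd ij < d" using Pd_lt by auto
    have "(snd y ij + z ij + f (fst ij) (inv a) * f (snd ij) a) mod p
        = ((- z ij + f (fst ij) a * f (snd ij) a) mod p + z ij + ((- f (fst ij) a) mod p) * f (snd ij) a) mod p"
      using ij by (simp add: y_def f_inv[OF lt(1) x(2)])
    also have "\<dots> = ((- z ij + f (fst ij) a * f (snd ij) a) + z ij + (- f (fst ij) a) * f (snd ij) a) mod p"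
      by (rule mod_simp3)
    also have "\<dots> = 0" by simp
    finally show "(snd y ij + z ij + f (fst ij) (inv a) * f (snd ij) a) mod p = 0" .
  qed
  then have "y \<otimes>\<^bsub>E\<^esub> x = \<one>\<^bsub>E\<^esub>" using x by (simp add: E_mult E_one y_def)
  then show "\<exists>y\<in>carrier E. y \<otimes>\<^bsub>E\<^esub> x = \<one>\<^bsub>E\<^esub>" using yc by blast
qed


end

definition zsec :: "nat \<Rightarrow> 'a \<Rightarrow> 'a \<times> (nat \<times> nat \<Rightarrow> int)" where
  "zsec d x = (x, restrict (\<lambda>_. 0) (Pd d))"

lemma (in group) comm_lemma:
  assumes "a \<in> carrier G" "b \<in> carrier G" "c \<in> carrier G" "a \<otimes> b = c \<otimes> (b \<otimes> a)"
  shows "a \<otimes> b \<otimes> inv a \<otimes> inv b = c"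
proof -
  have "a \<otimes> b \<otimes> inv a \<otimes> inv b = c \<otimes> (b \<otimes> a) \<otimes> inv a \<otimes> inv b" using assms by simp
  also have "\<dots> = c \<otimes> (b \<otimes> (a \<otimes> inv a) \<otimes> inv b)" using assms by (simp add: m_assoc)
  also have "\<dots> = c" using assms by simp
  finally show ?thesis .
qed

context dualb
begin

lemma zsec_car: "x \<in> carrier G \<Longrightarrow> zsec d x \<in> carrier E"
  using p_pos by (auto simp: zsec_def E_carrier)

lemma E_fst_car: "a \<in> carrier E \<Longrightarrow> fst a \<in> carrier G"
  by (auto simp: E_carrier)

lemma E_inv_fst: "a \<in> carrier E \<Longrightarrow> fst (inv\<^bsub>E\<^esub> a) = inv (fst a)"
proof -
  assume a: "a \<in> carrier E"
  interpret E: group E by (rule E_group)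
  have "inv\<^bsub>E\<^esub> a \<otimes>\<^bsub>E\<^esub> a = \<one>\<^bsub>E\<^esub>" using a by simp
  then have "fst (inv\<^bsub>E\<^esub> a) \<otimes> fst a = \<one>" by (simp add: E_mult E_one)
  then show ?thesis using a E_fst_car by (intro inv_equality[symmetric]) auto
qed

abbreviation "FF \<equiv> free_group (carrier G)"
abbreviation "phi \<equiv> ev E (zsec d)"

lemma phi_fst: "fst ` set w \<subseteq> carrier G \<Longrightarrow> fst (phi w) = ev G id w"
proof (induction w)
  case Nil then show ?case by (simp add: E_one)
next
  case (Cons l w)
  have c: "zsec d (fst l) \<in> carrier E" using Cons.prems zsec_car by auto
  then show ?case using Cons by (auto simp: E_mult E_inv_fst zsec_def)
qed

lemma phi_hom: "phi \<in> hom FF E"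
  using group.ev_hom[OF E_group, of "zsec d" "carrier G"] zsec_car by auto

lemma ev_hom_G: "ev G id \<in> hom FF G"
  using ev_hom[of id "carrier G"] by auto

lemma grp_FF: "group FF" by (rule group_free)

lemma ghom_phi: "group_hom FF E phi"
  using phi_hom grp_FF E_group by (simp add: group_hom_def group_hom_axioms_def)

lemma ghom_G: "group_hom FF G (ev G id)"
  using ev_hom_G grp_FF by (simp add: group_hom_def group_hom_axioms_def is_group)

lemma central:
  assumes "c \<in> carrier E" "fst c = \<one>" "b \<in> carrier E"
  shows "c \<otimes>\<^bsub>E\<^esub> b = b \<otimes>\<^bsub>E\<^esub> c"
proof -
  have b: "fst b \<in> carrier G" using assms E_fst_car by auto
  have "restrict (\<lambda>ij. (snd c ij + snd b ij + f (fst ij) (fst c) * f (snd ij) (fst b)) mod p) (Pd d)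
      = restrict (\<lambda>ij. (snd b ij + snd c ij + f (fst ij) (fst b) * f (snd ij) (fst c)) mod p) (Pd d)"
  proof (rule restrict_ext)
    fix ij assume "ij \<in> Pd d"
    then show "(snd c ij + snd b ij + f (fst ij) (fst c) * f (snd ij) (fst b)) mod p
      = (snd b ij + snd c ij + f (fst ij) (fst b) * f (snd ij) (fst c)) mod p"
      using Pd_lt f_one assms(2) by (simp add: add.commute)
  qed
  then show ?thesis using assms b by (simp add: E_mult)
qed

definition eP :: "nat \<times> nat \<Rightarrow> 'a \<times> (nat \<times> nat \<Rightarrow> int)" where
  "eP ij = (\<one>, restrict (\<lambda>kl. if kl = ij then 1 else 0) (Pd d))"

lemma eP_car: "eP ij \<in> carrier E"
  using p_gt1 by (auto simp: eP_def E_carrier)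

lemma comm_E:
  assumes ij: "ij \<in> Pd d"
  shows "zsec d (g (fst ij)) \<otimes>\<^bsub>E\<^esub> zsec d (g (snd ij)) = eP ij \<otimes>\<^bsub>E\<^esub> (zsec d (g (snd ij)) \<otimes>\<^bsub>E\<^esub> zsec d (g (fst ij)))"
proof -
  obtain i j where ijd: "ij = (i, j)" "i < j" "j < d" using ij by (auto simp: Pd_def)
  have gi: "g i \<in> carrier G" and gj: "g j \<in> carrier G" using g_car ijd by auto
  show ?thesis
  proof (rule prod_eqI)
    show "fst (zsec d (g (fst ij)) \<otimes>\<^bsub>E\<^esub> zsec d (g (snd ij))) =
      fst (eP ij \<otimes>\<^bsub>E\<^esub> (zsec d (g (snd ij)) \<otimes>\<^bsub>E\<^esub> zsec d (g (fst ij))))"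
      using gi gj ijd by (simp add: E_mult zsec_def eP_def m_comm)
  next
    show "snd (zsec d (g (fst ij)) \<otimes>\<^bsub>E\<^esub> zsec d (g (snd ij))) =
      snd (eP ij \<otimes>\<^bsub>E\<^esub> (zsec d (g (snd ij)) \<otimes>\<^bsub>E\<^esub> zsec d (g (fst ij))))"
    proof (rule ext)
      fix kl
      show "snd (zsec d (g (fst ij)) \<otimes>\<^bsub>E\<^esub> zsec d (g (snd ij))) kl =
        snd (eP ij \<otimes>\<^bsub>E\<^esub> (zsec d (g (snd ij)) \<otimes>\<^bsub>E\<^esub> zsec d (g (fst ij)))) kl"
      proof (cases "kl \<in> Pd d")
        case False then show ?thesis by (simp add: E_mult)
      next
        case True
        obtain k l where kld: "kl = (k, l)" "k < l" "l < d" using True by (auto simp: Pd_def)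
        have fi: "f k (g i) = (if k = i then 1 else 0)" "f l (g j) = (if l = j then 1 else 0)"
          "f k (g j) = (if k = j then 1 else 0)" "f l (g i) = (if l = i then 1 else 0)"
          using fg kld ijd by auto
        have f1: "f k \<one> = 0" using f_one kld by auto
        have p1: "1 mod p = 1" using p_gt1 by simp
        show ?thesis using True kld ijd p1
          by (auto simp: eP_def E_mult zsec_def fi f1)
      qed
    qed
  qed
qed

definition lett :: "nat \<Rightarrow> ('a \<times> bool) list" where "lett i = [(g i, True)]"

lemma lett_car: "i < d \<Longrightarrow> lett i \<in> carrier FF"
  using g_car by (simp add: lett_def carrier_free)

definition cw :: "nat \<times> nat \<Rightarrow> ('a \<times> bool) list" where
  "cw ij = lett (fst ij) \<otimes>\<^bsub>FF\<^esub> lett (snd ij) \<otimes>\<^bsub>FF\<^esub> inv\<^bsub>FF\<^esub> lett (fst ij) \<otimes>\<^bsub>FF\<^esub> inv\<^bsub>FF\<^esub> lett (snd ij)"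

abbreviation "RR \<equiv> pres_R G"
abbreviation "DD \<equiv> derived FF (carrier FF)"

lemma RR_kernel: "RR = kernel FF G (ev G id)"
  by (simp add: pres_R_def kernel_def pres_F_def fg_eval_ev)

lemma RR_sub: "subgroup RR FF"
  unfolding RR_kernel by (rule group_hom.subgroup_kernel[OF ghom_G])

lemma DD_sub: "subgroup DD FF"
  by (rule group.derived_is_subgroup[OF grp_FF]) simp

lemma phi_lett: "i < d \<Longrightarrow> phi (lett i) = zsec d (g i)"
proof -
  assume i: "i < d"
  then have "zsec d (g i) \<in> carrier E" using zsec_car g_car by auto
  then show ?thesis by (simp add: lett_def monoid.r_one[OF group.is_monoid[OF E_group]])
qed

lemma evG_lett: "i < d \<Longrightarrow> ev G id (lett i) = g i"
  using g_car by (simp add: lett_def)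

lemma cw_props:
  assumes ij: "ij \<in> Pd d"
  shows "cw ij \<in> RR \<inter> DD" "phi (cw ij) = eP ij"
proof -
  interpret FG: group_hom FF G "ev G id" by (rule ghom_G)
  interpret FE: group_hom FF E phi by (rule ghom_phi)
  have lt: "fst ij < d" "snd ij < d" using Pd_lt[OF ij] by auto
  have c: "lett (fst ij) \<in> carrier FF" "lett (snd ij) \<in> carrier FF" using lett_car lt by auto
  have cwc: "cw ij \<in> carrier FF" unfolding cw_def using c by simp
  have "cw ij \<in> DD" unfolding derived_def cw_def
    by (rule generate.incl) (use c in blast)
  moreover have "ev G id (cw ij) = g (fst ij) \<otimes> g (snd ij) \<otimes> inv g (fst ij) \<otimes> inv g (snd ij)"
    unfolding cw_def using c lt g_car by (simp add: evG_lett)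
  moreover have "g (fst ij) \<otimes> g (snd ij) \<otimes> inv g (fst ij) \<otimes> inv g (snd ij) = \<one>"
    using lt g_car by (intro comm_lemma) (auto simp: m_comm)
  ultimately show "cw ij \<in> RR \<inter> DD" using cwc by (simp add: RR_kernel kernel_def)
  show "phi (cw ij) = eP ij"
    unfolding cw_def using c lt
    by (simp add: phi_lett group.comm_lemma[OF E_group zsec_car zsec_car eP_car comm_E[OF ij]] g_car)
qed

end




lemma finite_Pd: "finite (Pd d)"
  by (rule finite_subset[of _ "{..<d} \<times> {..<d}"]) (auto simp: Pd_def)

context dualb
begin

abbreviation "KK \<equiv> mixed_commutator FF RR (carrier FF)"

lemma RR_car: "RR \<subseteq> carrier FF"
  using RR_sub subgroup.subset by blast

lemma KK_gens: "(\<Union>r\<in>RR. \<Union>h\<in>carrier FF. {r \<otimes>\<^bsub>FF\<^esub> h \<otimes>\<^bsub>FF\<^esub> inv\<^bsub>FF\<^esub> r \<otimes>\<^bsub>FF\<^esub> inv\<^bsub>FF\<^esub> h})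
   \<subseteq> kernel FF E phi"
proof (intro subsetI, elim UN_E singletonE)
  fix x r h assume r: "r \<in> RR" and h: "h \<in> carrier FF"
    and x: "x = r \<otimes>\<^bsub>FF\<^esub> h \<otimes>\<^bsub>FF\<^esub> inv\<^bsub>FF\<^esub> r \<otimes>\<^bsub>FF\<^esub> inv\<^bsub>FF\<^esub> h"
  interpret FE: group_hom FF E phi by (rule ghom_phi)
  interpret E: group E by (rule E_group)
  have rc: "r \<in> carrier FF" using r RR_car by auto
  have xc: "x \<in> carrier FF" using x rc h by simp
  have pr: "phi r \<in> carrier E" "phi h \<in> carrier E" using rc h by auto
  have "fst (phi r) = ev G id r" using rc by (intro phi_fst) (simp add: carrier_free)
  also have "\<dots> = \<one>" using r by (simp add: RR_kernel kernel_def)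
  finally have "phi r \<otimes>\<^bsub>E\<^esub> phi h = \<one>\<^bsub>E\<^esub> \<otimes>\<^bsub>E\<^esub> (phi h \<otimes>\<^bsub>E\<^esub> phi r)"
    using central[OF pr(1) _ pr(2)] pr by simp
  then have "phi r \<otimes>\<^bsub>E\<^esub> phi h \<otimes>\<^bsub>E\<^esub> inv\<^bsub>E\<^esub> phi r \<otimes>\<^bsub>E\<^esub> inv\<^bsub>E\<^esub> phi h = \<one>\<^bsub>E\<^esub>"
    using pr by (intro group.comm_lemma[OF E_group]) auto
  then have "phi x = \<one>\<^bsub>E\<^esub>" using x rc h by simp
  then show "x \<in> kernel FF E phi" using xc by (simp add: kernel_def)
qed

lemma KK_sub: "subgroup KK FF"
proof -
  interpret F: group FF by (rule grp_FF)
  show ?thesis unfolding mixed_commutator_def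
    by (rule F.generate_is_subgroup) (use RR_car in auto)
qed

lemma KK_ker: "KK \<subseteq> kernel FF E phi"
  unfolding mixed_commutator_def
  by (rule group.generate_subgroup_incl[OF grp_FF KK_gens group_hom.subgroup_kernel[OF ghom_phi]])

lemma reach_step:
  assumes v: "v \<in> Pd d \<rightarrow>\<^sub>E {0..<p}" and ij: "ij \<in> Pd d" and pos: "v ij > 0"
  shows "(\<one>, v(ij := v ij - 1)) \<otimes>\<^bsub>E\<^esub> eP ij = (\<one>, v)"
proof (rule prod_eqI)
  show "fst ((\<one>, v(ij := v ij - 1)) \<otimes>\<^bsub>E\<^esub> eP ij) = fst (\<one>, v)"
    by (simp add: E_mult eP_def)
next
  show "snd ((\<one>, v(ij := v ij - 1)) \<otimes>\<^bsub>E\<^esub> eP ij) = snd (\<one>, v)"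
  proof (rule ext)
    fix kl
    show "snd ((\<one>, v(ij := v ij - 1)) \<otimes>\<^bsub>E\<^esub> eP ij) kl = snd (\<one>, v) kl"
    proof (cases "kl \<in> Pd d")
      case False then show ?thesis using v by (simp add: E_mult PiE_arb[OF v False])
    next
      case True
      have f1: "f (fst kl) \<one> = 0" using f_one Pd_lt[OF True] by auto
      have r: "0 \<le> v kl" "v kl < p" using v True by (auto simp: PiE_iff)
      show ?thesis using True f1 r pos by (auto simp: E_mult eP_def)
    qed
  qed
qed

lemma reach:
  shows "\<forall>v. nat (sum v (Pd d)) = N \<longrightarrow> v \<in> Pd d \<rightarrow>\<^sub>E {0..<p} \<longrightarrow> (\<exists>u \<in> RR \<inter> DD. phi u = (\<one>, v))"
proof (induction N rule: less_induct)
  case (less N)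
  show ?case
  proof (intro allI impI)
    fix v assume N: "nat (sum v (Pd d)) = N" and v: "v \<in> Pd d \<rightarrow>\<^sub>E {0..<p}"
    have nn: "\<forall>kl\<in>Pd d. 0 \<le> v kl" using v by (auto simp: PiE_iff)
    show "\<exists>u \<in> RR \<inter> DD. phi u = (\<one>, v)"
    proof (cases "\<exists>ij\<in>Pd d. v ij > 0")
      case False
      then have z: "\<forall>kl\<in>Pd d. v kl = 0" using nn by force
      have "v = restrict (\<lambda>_. 0) (Pd d)"
      proof (rule ext)
        fix kl show "v kl = restrict (\<lambda>_. 0) (Pd d) kl"
          using z v by (cases "kl \<in> Pd d") (auto simp: PiE_arb[OF v])
      qed
      then have "phi \<one>\<^bsub>FF\<^esub> = (\<one>, v)" by (simp add: E_one)
      moreover have "\<one>\<^bsub>FF\<^esub> \<in> RR \<inter> DD" by (intro IntI subgroup.one_closed[OF RR_sub] subgroup.one_closed[OF DD_sub])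
      ultimately show ?thesis by blast
    next
      case True
      then obtain ij where ij: "ij \<in> Pd d" "v ij > 0" by blast
      define v' where "v' = v(ij := v ij - 1)"
      have v': "v' \<in> Pd d \<rightarrow>\<^sub>E {0..<p}" using v ij by (auto simp: v'_def PiE_iff extensional_def)
      have "sum v (Pd d) = v ij + sum v (Pd d - {ij})" using ij finite_Pd by (simp add: sum.remove)
      moreover have "sum v' (Pd d) = v' ij + sum v' (Pd d - {ij})" using ij finite_Pd by (simp add: sum.remove)
      moreover have "sum v' (Pd d - {ij}) = sum v (Pd d - {ij})" by (rule sum.cong) (auto simp: v'_def)
      moreover have "0 \<le> sum v (Pd d - {ij})" using nn by (intro sum_nonneg) auto
      ultimately have "nat (sum v' (Pd d)) < N" using N ij by (simp add: v'_def)
      then obtain u' where u': "u' \<in> RR \<inter> DD" "phi u' = (\<one>, v')" using less v' by blast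
      have cw: "cw ij \<in> RR \<inter> DD" "phi (cw ij) = eP ij" using cw_props[OF ij(1)] by auto
      have uc: "u' \<in> carrier FF" "cw ij \<in> carrier FF" using u' cw RR_car by auto
      have "phi (u' \<otimes>\<^bsub>FF\<^esub> cw ij) = phi u' \<otimes>\<^bsub>E\<^esub> phi (cw ij)"
        by (rule group_hom.hom_mult[OF ghom_phi uc])
      also have "\<dots> = (\<one>, v)"
        unfolding u'(2) cw(2) v'_def by (rule reach_step[OF v ij(1) ij(2)])
      finally have "phi (u' \<otimes>\<^bsub>FF\<^esub> cw ij) = (\<one>, v)" .
      moreover have "u' \<otimes>\<^bsub>FF\<^esub> cw ij \<in> RR \<inter> DD"
        using u' cw by (intro IntI subgroup.m_closed[OF RR_sub] subgroup.m_closed[OF DD_sub]) auto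
      ultimately show ?thesis by blast
    qed
  qed
qed

lemma schur_carrier_eq: "schur_multiplier_carrier G = (\<lambda>x. KK #>\<^bsub>FF\<^esub> x) ` (RR \<inter> DD)"
  by (simp add: schur_multiplier_carrier_def Let_def pres_F_def pres_R_def)

lemma schur_bound:
  assumes fin: "finite (schur_multiplier_carrier G)"
  shows "nat p ^ card (Pd d) \<le> card (schur_multiplier_carrier G)"
proof -
  let ?W = "Pd d \<rightarrow>\<^sub>E {0..<p}"
  have "\<forall>v\<in>?W. \<exists>u. u \<in> RR \<inter> DD \<and> phi u = (\<one>, v)" using reach by blast
  then obtain U where U: "\<And>v. v \<in> ?W \<Longrightarrow> U v \<in> RR \<inter> DD \<and> phi (U v) = (\<one>, v)"
    by metis
  interpret F: group FF by (rule grp_FF)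
  interpret FE: group_hom FF E phi by (rule ghom_phi)
  have inj: "inj_on (\<lambda>v. KK #>\<^bsub>FF\<^esub> U v) ?W"
  proof (rule inj_onI)
    fix v w assume v: "v \<in> ?W" and w: "w \<in> ?W" and eq: "KK #>\<^bsub>FF\<^esub> U v = KK #>\<^bsub>FF\<^esub> U w"
    have cv: "U v \<in> carrier FF" "U w \<in> carrier FF" using U v w RR_car by auto
    have "U v \<in> KK #>\<^bsub>FF\<^esub> U v" using F.rcos_self[OF cv(1) KK_sub] .
    then have "U v \<in> KK #>\<^bsub>FF\<^esub> U w" using eq by simp
    then obtain k where k: "k \<in> KK" "U v = k \<otimes>\<^bsub>FF\<^esub> U w" by (auto simp: r_coset_def)
    have kc: "k \<in> carrier FF" "phi k = \<one>\<^bsub>E\<^esub>" using k KK_ker by (auto simp: kernel_def)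
    have "phi (U v) = phi (U w)" using k kc cv by simp
    then show "v = w" using U v w by simp
  qed
  have "(\<lambda>v. KK #>\<^bsub>FF\<^esub> U v) ` ?W \<subseteq> schur_multiplier_carrier G"
    unfolding schur_carrier_eq using U by blast
  then have "card ?W \<le> card (schur_multiplier_carrier G)"
    using card_inj_on_le[OF inj _ fin] by blast
  moreover have "card ?W = nat p ^ card (Pd d)"
    using finite_Pd by (simp add: card_PiE)
  ultimately show ?thesis by simp
qed

end




context comm_group
begin

definition Tset :: "'a set \<Rightarrow> 'a \<Rightarrow> int \<Rightarrow> 'a set" where
  "Tset M x t = {y. \<exists>m\<in>M. \<exists>s::int. y = m \<otimes> x [^] (t * s)}"

lemma Tset_sub:
  assumes M: "subgroup M G" and x: "x \<in> carrier G"
  shows "subgroup (Tset M x t) G"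
proof (rule subgroupI)
  have Mc: "M \<subseteq> carrier G" by (rule subgroup.subset[OF M])
  show "Tset M x t \<subseteq> carrier G" using Mc x by (auto simp: Tset_def)
  show "Tset M x t \<noteq> {}"
  proof -
    have "\<one> \<otimes> x [^] (t * 0) \<in> Tset M x t" unfolding Tset_def using subgroup.one_closed[OF M] by blast
    then show ?thesis by blast
  qed
next
  fix a assume "a \<in> Tset M x t"
  then obtain m s where m: "m \<in> M" "a = m \<otimes> x [^] (t * s)" by (auto simp: Tset_def)
  have mc: "m \<in> carrier G" using m(1) subgroup.subset[OF M] by blast
  have e: "x [^] (t * (- s)) = inv (x [^] (t * s))" using x int_pow_neg[of x "t * s"] by simp
  have "inv a = inv m \<otimes> x [^] (t * (- s))"
    unfolding e m(2) using mc x by (intro inv_mult) auto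
  moreover have "inv m \<in> M" by (rule subgroup.m_inv_closed[OF M m(1)])
  ultimately show "inv a \<in> Tset M x t" unfolding Tset_def by blast
next
  fix a b assume "a \<in> Tset M x t" "b \<in> Tset M x t"
  then obtain m s m' s' where m: "m \<in> M" "a = m \<otimes> x [^] (t * s)" and m': "m' \<in> M" "b = m' \<otimes> x [^] (t * s')"
    by (auto simp: Tset_def)
  have mc: "m \<in> carrier G" "m' \<in> carrier G" using m(1) m'(1) subgroup.subset[OF M] by blast+
  have "a \<otimes> b = (m \<otimes> m') \<otimes> x [^] (t * (s + s'))"
    using m m' mc x by (simp add: distrib_left int_pow_mult m_ac)
  moreover have "m \<otimes> m' \<in> M" by (rule subgroup.m_closed[OF M m(1) m'(1)])
  ultimately show "a \<otimes> b \<in> Tset M x t" unfolding Tset_def by blast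
qed

lemma Tset_M: "subgroup M G \<Longrightarrow> x \<in> carrier G \<Longrightarrow> M \<subseteq> Tset M x t"
proof
  fix m assume M: "subgroup M G" and x: "x \<in> carrier G" and m: "m \<in> M"
  then have "m = m \<otimes> x [^] (t * 0)" using subgroup.subset[OF M] by auto
  then show "m \<in> Tset M x t" using m unfolding Tset_def by blast
qed

lemma Tset_x: "subgroup M G \<Longrightarrow> x \<in> carrier G \<Longrightarrow> x [^] t \<in> Tset M x t"
proof -
  assume M: "subgroup M G" and x: "x \<in> carrier G"
  have "x [^] t = \<one> \<otimes> x [^] (t * 1)" using x by simp
  then show ?thesis using subgroup.one_closed[OF M] unfolding Tset_def by blast
qed

lemma maximal_chi:
  assumes fin: "finite (carrier G)" and p: "Factorial_Ring.prime (p::nat)" and ord: "order G = p ^ n"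
    and Mmax: "maximal_subgroup M G" and x: "x \<in> carrier G" and xM: "x \<notin> M"
  shows "\<exists>\<chi>. (\<forall>y\<in>carrier G. 0 \<le> \<chi> y \<and> \<chi> y < int p)
     \<and> (\<forall>y\<in>carrier G. \<forall>z\<in>carrier G. \<chi> (y \<otimes> z) = (\<chi> y + \<chi> z) mod int p) \<and> \<chi> x = 1"
proof -
  have M: "subgroup M G" and Mne: "M \<noteq> carrier G"
    and Mm: "\<And>K. subgroup K G \<Longrightarrow> M \<subseteq> K \<Longrightarrow> K = M \<or> K = carrier G"
    using Mmax by (auto simp: maximal_subgroup_def)
  have Mc: "M \<subseteq> carrier G" by (rule subgroup.subset[OF M])
  have p1: "1 < p" using p prime_gt_1_nat by blast
  have T1: "Tset M x 1 = carrier G"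
  proof -
    have "Tset M x 1 = M \<or> Tset M x 1 = carrier G" using Mm[OF Tset_sub[OF M x] Tset_M[OF M x]] .
    moreover have "x \<in> Tset M x 1" using Tset_x[OF M x, of 1] x by simp
    ultimately show ?thesis using xM by blast
  qed
  have ordpos: "0 < order G" using fin order_gt_0_iff_finite by blast
  have ex: "\<exists>q::nat. 0 < q \<and> x [^] q \<in> M"
    using ordpos pow_order_eq_1[OF x] subgroup.one_closed[OF M] by metis
  define q where "q = (LEAST q::nat. 0 < q \<and> x [^] q \<in> M)"
  have q: "0 < q" "x [^] q \<in> M" using LeastI_ex[OF ex] unfolding q_def by auto
  have qmin: "\<And>r::nat. 0 < r \<Longrightarrow> x [^] r \<in> M \<Longrightarrow> q \<le> r"
    unfolding q_def by (rule Least_le) simp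
  have memiff: "\<And>k::int. x [^] k \<in> M \<longleftrightarrow> int q dvd k"
  proof
    fix k :: int assume "int q dvd k"
    then obtain s where "k = int q * s" by (auto simp: dvd_def)
    then have "x [^] k = (x [^] int q) [^] s" using x by (simp add: int_pow_pow)
    then show "x [^] k \<in> M" using q(2) subgroup_int_pow_closed[OF M] by (simp add: int_pow_int)
  next
    fix k :: int assume k: "x [^] k \<in> M"
    define r where "r = k mod int q"
    have r: "0 \<le> r" "r < int q" using q(1) by (auto simp: r_def)
    have kk: "k = r + int q * (k div int q)" by (simp add: r_def)
    have "x [^] r = x [^] k \<otimes> inv ((x [^] int q) [^] (k div int q))"
    proof -
      have "x [^] k = x [^] r \<otimes> (x [^] int q) [^] (k div int q)"
        using x by (subst kk) (simp add: int_pow_mult int_pow_pow)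
      then show ?thesis using x by (simp add: m_assoc)
    qed
    moreover have "(x [^] int q) [^] (k div int q) \<in> M"
      using q(2) subgroup_int_pow_closed[OF M] by (simp add: int_pow_int)
    ultimately have "x [^] r \<in> M" using subgroup.m_closed[OF M k subgroup.m_inv_closed[OF M]] by simp
    then have "x [^] (nat r) \<in> M" using r by (metis int_pow_int nat_0_le)
    then have "r = 0" using qmin[of "nat r"] r by (cases "r = 0") auto
    then show "int q dvd k" using r_def by (simp add: dvd_eq_mod_eq_0)
  qed
  have "x [^] (int (p ^ n)) \<in> M" unfolding int_pow_int using pow_order_eq_1[OF x] ord subgroup.one_closed[OF M] by simp
  then have "q dvd p ^ n" using memiff by (metis int_dvd_int_iff)
  then obtain e where e: "e \<le> n" "q = p ^ e" using divides_primepow_nat[OF p] by blast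
  have "e \<noteq> 0"
  proof
    assume "e = 0" then have "q = 1" using e by simp
    then have "x [^] (1::int) \<in> M" using memiff by simp
    then show False using xM x by simp
  qed
  have qp: "q = p"
  proof (rule ccontr)
    assume "q \<noteq> p"
    then have e2: "2 \<le> e" using e \<open>e \<noteq> 0\<close> by (cases e) auto
    have pq: "\<not> int q dvd int p"
    proof
      assume "int q dvd int p"
      then have "q dvd p" by simp
      then have "q \<le> p" using p1 dvd_imp_le by auto
      moreover have "p ^ 2 \<le> p ^ e" using power_increasing[OF e2, of p] p1 by simp
      then have "p * p \<le> q" using e(2) by (simp add: power2_eq_square)
      moreover have "p < p * p" using p1 by simp
      ultimately show False by linarith
    qed
    have T: "Tset M x (int p) = M \<or> Tset M x (int p) = carrier G"
      using Mm[OF Tset_sub[OF M x] Tset_M[OF M x]] .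
    have "x [^] int p \<in> Tset M x (int p)" using Tset_x[OF M x] .
    moreover have "x [^] int p \<notin> M" using memiff pq by blast
    moreover have "x \<notin> Tset M x (int p)"
    proof
      assume "x \<in> Tset M x (int p)"
      then obtain m s where m: "m \<in> M" "x = m \<otimes> x [^] (int p * s)" by (auto simp: Tset_def)
      have mc: "m \<in> carrier G" using m(1) Mc by auto
      have "x [^] (1 - int p * s) = x \<otimes> inv (x [^] (int p * s))" using x by (simp add: int_pow_diff)
      also have "\<dots> = m \<otimes> x [^] (int p * s) \<otimes> inv (x [^] (int p * s))"
        by (rule arg_cong[where f = "\<lambda>y. y \<otimes> inv (x [^] (int p * s))"], rule m(2))
      also have "\<dots> = m" using mc x by (simp add: m_assoc)
      finally have "x [^] (1 - int p * s) \<in> M" using m(1) by simp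
      then have "int q dvd 1 - int p * s" using memiff by blast
      moreover have "p dvd q" using e(2) \<open>e \<noteq> 0\<close> by (simp add: dvd_power)
      then have "int p dvd int q" by simp
      ultimately have "int p dvd 1 - int p * s" by (rule dvd_trans[rotated])
      then have "int p dvd (1 - int p * s) + int p * s" by (intro dvd_add) auto
      then have "int p dvd 1" by simp
      then show False using p1 by simp
    qed
    ultimately show False using T x by blast
  qed
  have rep: "\<And>y. y \<in> carrier G \<Longrightarrow> \<exists>k::int. \<exists>m\<in>M. y = m \<otimes> x [^] k"
  proof -
    fix y assume "y \<in> carrier G"
    then have "y \<in> Tset M x 1" using T1 by simp
    then obtain m s where "m \<in> M" "y = m \<otimes> x [^] ((1::int) * s)" unfolding Tset_def by blast
    then show "\<exists>k::int. \<exists>m\<in>M. y = m \<otimes> x [^] k" by (intro exI[of _ s] bexI[of _ m]) auto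
  qed
  have welldef: "\<And>m m' (k::int) (k'::int). m \<in> M \<Longrightarrow> m' \<in> M \<Longrightarrow> m \<otimes> x [^] k = m' \<otimes> x [^] k' \<Longrightarrow> k mod int p = k' mod int p"
  proof -
    fix m m' and k k' :: int assume m: "m \<in> M" "m' \<in> M" and eq: "m \<otimes> x [^] k = m' \<otimes> x [^] k'"
    have mc: "m \<in> carrier G" "m' \<in> carrier G" using m Mc by auto
    have "x [^] (k - k') = x [^] k \<otimes> inv (x [^] k')" using x by (simp add: int_pow_diff)
    also have "\<dots> = inv m \<otimes> m'"
    proof -
      have "inv m \<otimes> (m \<otimes> x [^] k) \<otimes> inv (x [^] k') = inv m \<otimes> (m' \<otimes> x [^] k') \<otimes> inv (x [^] k')"
        using eq by simp
      then show ?thesis using mc x by (simp add: m_assoc[symmetric]) (simp add: m_assoc)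
    qed
    finally have "x [^] (k - k') \<in> M" using subgroup.m_closed[OF M subgroup.m_inv_closed[OF M m(1)] m(2)] by simp
    then have "int p dvd k - k'" using memiff qp by blast
    then show "k mod int p = k' mod int p" by (simp add: mod_eq_dvd_iff)
  qed
  define chi where "chi y = (SOME k::int. \<exists>m\<in>M. y = m \<otimes> x [^] k) mod int p" for y
  have chiI: "\<And>y m (k::int). m \<in> M \<Longrightarrow> y = m \<otimes> x [^] k \<Longrightarrow> chi y = k mod int p"
  proof -
    fix y m and k :: int assume m: "m \<in> M" and y: "y = m \<otimes> x [^] k"
    have ex: "\<exists>k::int. \<exists>m\<in>M. y = m \<otimes> x [^] k" by (intro exI[of _ k] bexI[OF _ m]) (rule y)
    obtain m' where m': "m' \<in> M" "y = m' \<otimes> x [^] (SOME k::int. \<exists>m\<in>M. y = m \<otimes> x [^] k)"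
      using someI_ex[OF ex] by blast
    have "m' \<otimes> x [^] (SOME k::int. \<exists>m\<in>M. y = m \<otimes> x [^] k) = m \<otimes> x [^] k"
      by (rule trans[OF sym[OF m'(2)] y])
    from welldef[OF m'(1) m this] show "chi y = k mod int p" unfolding chi_def by simp
  qed
  show ?thesis
  proof (intro exI conjI ballI)
    fix y assume "y \<in> carrier G"
    show "0 \<le> chi y" "chi y < int p" using p1 by (simp_all add: chi_def)
  next
    fix y z assume y: "y \<in> carrier G" and z: "z \<in> carrier G"
    obtain k :: int and m where km: "m \<in> M" "y = m \<otimes> x [^] k" using rep[OF y] by blast
    obtain k' :: int and m' where km': "m' \<in> M" "z = m' \<otimes> x [^] k'" using rep[OF z] by blast
    have mc: "m \<in> carrier G" "m' \<in> carrier G" using km km' Mc by auto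
    have e1: "y \<otimes> z = (m \<otimes> m') \<otimes> x [^] (k + k')"
      unfolding km(2) km'(2) using mc x by (simp add: int_pow_mult m_ac)
    have e2: "m \<otimes> m' \<in> M" by (rule subgroup.m_closed[OF M km(1) km'(1)])
    have "chi (y \<otimes> z) = (k + k') mod int p" by (rule chiI[OF e2 e1])
    moreover have "chi y = k mod int p" by (rule chiI[OF km])
    moreover have "chi z = k' mod int p" by (rule chiI[OF km'])
    ultimately show "chi (y \<otimes> z) = (chi y + chi z) mod int p" by (simp add: mod_add_eq)
  next
    have "x = \<one> \<otimes> x [^] (1::int)" using x by simp
    then have "chi x = 1 mod int p" using chiI[OF subgroup.one_closed[OF M]] by blast
    then show "chi x = 1" using p1 by simp
  qed
qed

end




context dualb
begin

lemma extend:
  assumes chi_range: "\<And>y. y \<in> carrier G \<Longrightarrow> 0 \<le> chi y \<and> chi y < p"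
  and chi_hom: "\<And>y z. y \<in> carrier G \<Longrightarrow> z \<in> carrier G \<Longrightarrow> chi (y \<otimes> z) = (chi y + chi z) mod p"
  and x: "x \<in> carrier G" and chix: "chi x = 1" and fx: "\<And>i. i < d \<Longrightarrow> f i x = 0"
  shows "\<exists>f' g'. dualb G p (Suc d) f' g'"
proof -
  define chi' where "chi' y = (chi y - (\<Sum>j<d. chi (g j) * f j y)) mod p" for y
  define f' where "f' i = (if i < d then f i else chi')" for i
  define g' where "g' j = (if j < d then g j else x)" for j
  have hom': "chi' (y \<otimes> z) = (chi' y + chi' z) mod p" if y: "y \<in> carrier G" and z: "z \<in> carrier G" for y z
  proof -
    have s1: "(\<Sum>j<d. chi (g j) * f j (y \<otimes> z)) = (\<Sum>j<d. chi (g j) * ((f j y + f j z) mod p))"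
      by (rule sum.cong) (auto simp: f_hom y z)
    have s2: "(\<Sum>j<d. chi (g j) * (f j y + f j z)) = (\<Sum>j<d. chi (g j) * f j y) + (\<Sum>j<d. chi (g j) * f j z)"
      by (simp add: distrib_left sum.distrib)
    define L where "L = (chi y + chi z) mod p - (\<Sum>j<d. chi (g j) * ((f j y + f j z) mod p))"
    define R where "R = (chi y - (\<Sum>j<d. chi (g j) * f j y)) + (chi z - (\<Sum>j<d. chi (g j) * f j z))"
    have "L - R = ((chi y + chi z) mod p - (chi y + chi z))
        - (\<Sum>j<d. chi (g j) * ((f j y + f j z) mod p - (f j y + f j z)))"
      unfolding L_def R_def using s2 by (simp add: sum_subtractf right_diff_distrib algebra_simps)
    moreover have "p dvd ((chi y + chi z) mod p - (chi y + chi z))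
        - (\<Sum>j<d. chi (g j) * ((f j y + f j z) mod p - (f j y + f j z)))"
      by (intro dvd_diff dvd_mod_sub dvd_sum dvd_mult dvd_mod_sub)
    ultimately have "L mod p = R mod p" by (metis mod_eq_dvd_iff)
    moreover have "chi' (y \<otimes> z) = L mod p" unfolding chi'_def L_def using s1 chi_hom[OF y z] by simp
    moreover have "(chi' y + chi' z) mod p = R mod p" unfolding chi'_def R_def by (simp add: mod_add_eq)
    ultimately show ?thesis by simp
  qed
  have chi'_g: "chi' (g k) = 0" if k: "k < d" for k
  proof -
    have "(\<Sum>j<d. chi (g j) * f j (g k)) = (\<Sum>j<d. if j = k then chi (g j) else 0)"
      by (rule sum.cong) (auto simp: fg k)
    also have "\<dots> = chi (g k)" using k by simp
    finally show ?thesis unfolding chi'_def by simp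
  qed
  have chi'_x: "chi' x = 1"
  proof -
    have "(\<Sum>j<d. chi (g j) * f j x) = 0" by (rule sum.neutral) (simp add: fx)
    then show ?thesis unfolding chi'_def using chix p_gt1 by simp
  qed
  have "dualb G p (Suc d) f' g'"
  proof (rule dualb.intro[OF comm_group_axioms], rule dualb_axioms.intro)
    show "1 < p" by (rule p_gt1)
  next
    fix i y assume i: "i < Suc d" and y: "y \<in> carrier G"
    show "0 \<le> f' i y \<and> f' i y < p"
      using f_range[OF _ y] p_pos by (cases "i < d") (auto simp: f'_def chi'_def)
  next
    fix i y z assume i: "i < Suc d" and y: "y \<in> carrier G" and z: "z \<in> carrier G"
    show "f' i (y \<otimes> z) = (f' i y + f' i z) mod p"
      using f_hom[OF _ y z] hom'[OF y z] by (cases "i < d") (auto simp: f'_def)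
  next
    fix j assume "j < Suc d" then show "g' j \<in> carrier G" using g_car x by (auto simp: g'_def)
  next
    fix i j assume i: "i < Suc d" and j: "j < Suc d"
    show "f' i (g' j) = (if i = j then 1 else 0)"
    proof (cases "i < d")
      case True
      then show ?thesis using j fg fx by (cases "j < d") (auto simp: f'_def g'_def)
    next
      case False
      then have "i = d" using i by simp
      then show ?thesis using j chi'_g chi'_x by (cases "j < d") (auto simp: f'_def g'_def)
    qed
  qed
  then show ?thesis by blast
qed

lemma d_bound:
  assumes "finite (carrier G)"
  shows "d \<le> card (carrier G)"
proof -
  have "inj_on g {..<d}"
  proof (rule inj_onI)
    fix i j assume i: "i \<in> {..<d}" and j: "j \<in> {..<d}" and e: "g i = g j"
    have "f i (g i) = 1" using fg i by simp
    then have "f i (g j) = 1" using e by simp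
    then show "i = j" using fg i j by (auto split: if_splits)
  qed
  moreover have "g ` {..<d} \<subseteq> carrier G" using g_car by auto
  ultimately show ?thesis using card_inj_on_le[OF _ _ assms] by fastforce
qed

definition NN :: "'a set" where "NN = {x \<in> carrier G. \<forall>i<d. f i x = 0}"

lemma counting:
  assumes fin: "finite (carrier G)"
  shows "card (carrier G) \<le> nat p ^ d * card NN"
proof -
  define V where "V x = restrict (\<lambda>i. f i x) {..<d}" for x
  define rep where "rep y = (SOME x. x \<in> carrier G \<and> V x = y)" for y
  have rep: "rep (V x) \<in> carrier G \<and> V (rep (V x)) = V x" if "x \<in> carrier G" for x
    unfolding rep_def by (rule someI[of _ x]) (use that in simp)
  define h where "h x = (V x, x \<otimes> inv (rep (V x)))" for x
  have inj: "inj_on h (carrier G)"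
  proof (rule inj_onI)
    fix x y assume x: "x \<in> carrier G" and y: "y \<in> carrier G" and e: "h x = h y"
    then have v: "V x = V y" and e2: "x \<otimes> inv (rep (V x)) = y \<otimes> inv (rep (V x))"
      by (auto simp: h_def)
    have "rep (V x) \<in> carrier G" using rep[OF x] by simp
    then show "x = y" using e2 x y by simp
  qed
  have img: "h ` carrier G \<subseteq> (V ` carrier G) \<times> NN"
  proof
    fix w assume "w \<in> h ` carrier G"
    then obtain x where x: "x \<in> carrier G" and w: "w = h x" by blast
    have r: "rep (V x) \<in> carrier G" "V (rep (V x)) = V x" using rep[OF x] by auto
    have "f i (x \<otimes> inv (rep (V x))) = 0" if i: "i < d" for i
    proof -
      have fr: "f i (rep (V x)) = f i x" using fun_cong[OF r(2), of i] i by (simp add: V_def)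
      have "f i (x \<otimes> inv (rep (V x))) = (f i x + f i (inv (rep (V x)))) mod p"
        using r(1) by (intro f_hom[OF i x]) simp
      also have "\<dots> = (f i x + (- f i x) mod p) mod p" using f_inv[OF i r(1)] fr by simp
      also have "\<dots> = (f i x + - f i x) mod p" by (rule mod_add_right_eq)
      also have "\<dots> = 0" by simp
      finally show ?thesis .
    qed
    then have "x \<otimes> inv (rep (V x)) \<in> NN" using x r by (simp add: NN_def)
    then show "w \<in> (V ` carrier G) \<times> NN" using w x by (simp add: h_def)
  qed
  have finNN: "finite NN" using fin by (rule finite_subset[rotated]) (auto simp: NN_def)
  have "V ` carrier G \<subseteq> {..<d} \<rightarrow>\<^sub>E {0..<p}"
    using f_range by (auto simp: V_def)
  then have cV: "card (V ` carrier G) \<le> nat p ^ d"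
    using card_mono[OF finite_PiE[of "{..<d}" "\<lambda>_. {0..<p}"]] by (simp add: card_PiE)
  have "card (carrier G) \<le> card ((V ` carrier G) \<times> NN)"
    using card_inj_on_le[OF inj img] fin finNN by simp
  also have "\<dots> = card (V ` carrier G) * card NN" by (simp add: card_cartesian_product)
  also have "\<dots> \<le> nat p ^ d * card NN" using cV by simp
  finally show ?thesis .
qed

end




lemma card_Pd: "2 * card (Pd d) = d * (d - 1)"
proof (induction d)
  case 0 then show ?case by (simp add: Pd_def)
next
  case (Suc d)
  have e: "Pd (Suc d) = Pd d \<union> (\<lambda>i. (i, d)) ` {..<d}" by (auto simp: Pd_def)
  have disj: "Pd d \<inter> (\<lambda>i. (i, d)) ` {..<d} = {}" by (auto simp: Pd_def)
  have "card (Pd (Suc d)) = card (Pd d) + card ((\<lambda>i. (i, d)) ` {..<d})"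
    unfolding e by (rule card_Un_disjoint) (use finite_Pd disj in auto)
  also have "card ((\<lambda>i. (i, d)) ` {..<d}) = d" by (subst card_image) (auto simp: inj_on_def)
  finally show ?case using Suc by (cases d) (auto simp: algebra_simps)
qed

lemma main_db:
  fixes p n a :: nat
  assumes p: "Factorial_Ring.prime p" and G: "comm_group G" and fin: "finite (carrier G)"
    and ord: "order G = p ^ n" and fr: "card (frattini G) = p ^ a"
  shows "\<exists>D f g. dualb G (int p) D f g \<and> n \<le> D + a"
proof -
  interpret comm_group G by (rule G)
  define P where "P D = (\<exists>f g. dualb G (int p) D f g)" for D
  have p1: "1 < p" using p prime_gt_1_nat by blast
  have P0: "P 0" unfolding P_def dualb_def dualb_axioms_def using G p1 by auto
  have Pb: "D \<le> card (carrier G)" if "P D" for D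
    using that dualb.d_bound[OF _ fin] unfolding P_def by blast
  define D where "D = (GREATEST D. P D)"
  have PD: "P D" unfolding D_def by (rule GreatestI_nat[where P=P, OF P0 Pb])
  have Dmax: "D' \<le> D" if "P D'" for D' unfolding D_def by (rule Greatest_le_nat[where P=P, OF that Pb])
  obtain f g where db: "dualb G (int p) D f g" using PD unfolding P_def by blast
  interpret db: dualb G "int p" D f g by (rule db)
  have NNsub: "db.NN \<subseteq> frattini G"
  proof
    fix x assume x: "x \<in> db.NN"
    then have xc: "x \<in> carrier G" and fx: "\<And>i. i < D \<Longrightarrow> f i x = 0" by (auto simp: db.NN_def)
    show "x \<in> frattini G"
    proof (rule ccontr)
      assume "x \<notin> frattini G"
      then obtain M where M: "maximal_subgroup M G" "x \<notin> M" using xc by (auto simp: frattini_def)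
      obtain chi where chi: "\<forall>y\<in>carrier G. 0 \<le> chi y \<and> chi y < int p"
        "\<forall>y\<in>carrier G. \<forall>z\<in>carrier G. chi (y \<otimes>\<^bsub>G\<^esub> z) = (chi y + chi z) mod int p" "chi x = 1"
        using maximal_chi[OF fin p ord M(1) xc M(2)] by blast
      have "\<exists>f' g'. dualb G (int p) (Suc D) f' g'"
        by (rule db.extend[of chi x]) (use chi xc fx in auto)
      then have "Suc D \<le> D" using Dmax unfolding P_def by blast
      then show False by simp
    qed
  qed
  have finF: "finite (frattini G)" using fin by (rule finite_subset[rotated]) (auto simp: frattini_def)
  have cN: "card db.NN \<le> p ^ a" using card_mono[OF finF NNsub] fr by simp
  have "p ^ n \<le> nat (int p) ^ D * card db.NN" using db.counting[OF fin] ord by (simp add: order_def)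
  also have "\<dots> \<le> p ^ D * p ^ a" using cN by simp
  also have "\<dots> = p ^ (D + a)" by (simp add: power_add)
  finally have "n \<le> D + a" using power_le_imp_le_exp[OF p1] by blast
  then show ?thesis using db by blast
qed

theorem lemma2p1:
  fixes G :: "('a, 'b) monoid_scheme" and p n a k :: nat and t :: int
  assumes "Factorial_Ring.prime p"
    and "comm_group G"
    and "finite (carrier G)"
    and "order G = p ^ n"
    and "schur_multiplier_order G = p ^ k"
    and "t = int (n * (n - 1) div 2) - int k"
    and "card (frattini G) = p ^ a"
    and "a \<ge> 1"
  shows "\<exists>m::nat. real n = (real a * (real a + 1) + 2 * of_int t + 2 * real m) / (2 * real a)"
proof -
  note p = assms(1)
  have p1: "1 < p" using p prime_gt_1_nat by blast
  obtain D f g where db: "dualb G (int p) D f g" and nD: "n \<le> D + a"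
    using main_db[OF assms(1,2,3,4,7)] by blast
  have "0 < schur_multiplier_order G" using assms(5) p1 by simp
  then have finS: "finite (schur_multiplier_carrier G)"
    unfolding schur_multiplier_order_def using card_ge_0_finite by blast
  have "nat (int p) ^ card (Pd D) \<le> card (schur_multiplier_carrier G)"
    by (rule dualb.schur_bound[OF db finS])
  then have "p ^ card (Pd D) \<le> p ^ k" using assms(5) by (simp add: schur_multiplier_order_def)
  then have ck: "card (Pd D) \<le> k" using power_le_imp_le_exp[OF p1] by blast
  have finF: "finite (frattini G)" using assms(3) by (rule finite_subset[rotated]) (auto simp: frattini_def)
  have "card (frattini G) \<le> card (carrier G)" using card_mono[OF assms(3)] by (auto simp: frattini_def)
  then have "p ^ a \<le> p ^ n" using assms(4,7) by (simp add: order_def)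
  then have an: "a \<le> n" using power_le_imp_le_exp[OF p1] by blast
  define e where "e = n - a"
  have ne: "n = e + a" using an by (simp add: e_def)
  have eD: "e \<le> D" using nD by (simp add: e_def)
  have "e * (e - 1) \<le> D * (D - 1)" using eD by (intro mult_le_mono) auto
  then have ek: "e * (e - 1) \<le> 2 * k" using card_Pd[of D] ck by linarith
  have ev1: "even (n * (n - 1))" by (cases n) simp_all
  have ev2: "even (a * (a + 1))" by simp
  define h where "h = n * (n - 1) div 2"
  define A where "A = a * (a + 1) div 2"
  have h2: "2 * h = n * (n - 1)" using ev1 by (simp add: h_def)
  have A2: "2 * A = a * (a + 1)" using ev2 by (simp add: A_def)
  have t: "t = int h - int k" using assms(6) by (simp add: h_def)
  have n1: "int (n - 1) = int n - 1" using an assms(8) by simp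
  have h2i: "2 * int h = int n * (int n - 1)"
    using arg_cong[OF h2, of int] unfolding of_nat_mult n1 by simp
  have A2i: "2 * int A = int a * (int a + 1)" using A2 by (metis of_nat_1 of_nat_add of_nat_mult of_nat_numeral)
  have eki: "int e * (int e - 1) \<le> 2 * int k"
  proof (cases "e = 0")
    case True then show ?thesis by simp
  next
    case False
    then have "int (e * (e - 1)) = int e * (int e - 1)" by (simp add: of_nat_diff)
    then show ?thesis using ek by (metis of_nat_le_iff of_nat_mult of_nat_numeral)
  qed
  have nei: "int n = int e + int a" using ne by simp
  define Q where "Q = int a * int n - int A - t"
  have "2 * Q = 2 * int a * int n - int a * (int a + 1) - int n * (int n - 1) + 2 * int k"
    unfolding Q_def t using h2i A2i by (simp add: algebra_simps)
  also have "\<dots> = 2 * int k - int e * (int e - 1)" unfolding nei by (simp add: algebra_simps)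
  finally have Q2: "2 * Q = 2 * int k - int e * (int e - 1)" .
  have Qnn: "0 \<le> Q" using Q2 eki by linarith
  define m where "m = nat Q"
  have rm: "real m = of_int Q" using Qnn by (simp add: m_def)
  have rA: "2 * real A = real a * (real a + 1)"
    using arg_cong[OF A2, of real] by (simp add: algebra_simps)
  have num: "real a * (real a + 1) + 2 * of_int t + 2 * real m = 2 * real a * real n"
    unfolding rm Q_def using rA by (simp add: algebra_simps)
  have "real a \<noteq> 0" using assms(8) by simp
  then have "real n = (real a * (real a + 1) + 2 * of_int t + 2 * real m) / (2 * real a)"
    unfolding num by simp
  then show ?thesis by blast
qed


end
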